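(* Let $m\ge1$, $n=2m$, $\alpha$ a primitive element of $\mathbb{F}_{2^n}$, $\beta=\alpha^{2^m+1}$, $\xi=\alpha^{2^m-1}$, $U=\langle\xi\rangle$, $\Gamma=\{\beta,\ldots,\beta^{2^{m-1}-1}\}$, and let $F:\mathbb{F}_{2^n}\to\mathbb{F}_2$ be the Boolean function with $\mathrm{Supp}(F)=\{yz:y\in\Gamma,z\in U\}\cup\{1,\xi,\ldots,\xi^{2^{m-1}}\}$. Then the nonlinearity of $F$ satisfies $$\mathcal{N}_F>2^{n-1}-\Big(\frac{\ln 2}{\pi}\,m+0.92\Big)2^m-1.$$
   Context: The nonlinearity of $F:\mathbb{F}_{2^n}\to\mathbb{F}_2$ is $\mathcal{N}_F=\min_{a}\,|\{x:F(x)\neq a(x)\}|$ over all affine Boolean functions $a$ (degree $\le1$); equivalently $\mathcal{N}_F=2^{n-1}-\frac12\max_{\lambda\in\mathbb{F}_{2^n}}|W_F(\lambda)|$, where $W_F(\lambda)=\sum_{x\in\mathbb{F}_{2^n}}(-1)^{F(x)+\mathrm{tr}_1^n(\lambda x)}$ and $\mathrm{tr}_1^n(x)=\sum_{i=0}^{n-1}x^{2^i}$. *)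

theory Defs
  imports Complex_Main "HOL-Library.Cardinality"
begin

definition primitive_element :: "'a::{field,finite} \<Rightarrow> bool" where
  "primitive_element \<alpha> \<longleftrightarrow> (\<forall>x. x \<noteq> 0 \<longrightarrow> (\<exists>k::nat. x = \<alpha> ^ k))"

text \<open>Boolean functions are modelled as predicates (True = 1, False = 0).
  A Boolean function is affine (algebraic degree at most 1 over F_2) iff
  a(x+y) = a(x) + a(y) + a(0) in F_2 for all x, y.\<close>
definition affine_bool :: "('a::ab_group_add \<Rightarrow> bool) \<Rightarrow> bool" where
  "affine_bool a \<longleftrightarrow> (\<forall>x y. a (x + y) = (a x \<noteq> (a y \<noteq> a 0)))"

definition nonlinearity :: "('a::{ab_group_add,finite} \<Rightarrow> bool) \<Rightarrow> nat" where
  "nonlinearity F = Min {card {x. F x \<noteq> a x} | a. affine_bool a}"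

end

theory Submission
  imports Defs "HOL-Analysis.Complex_Transcendental"
begin


lemma ln_lower_aux: assumes "(1::real) \<le> x" shows "2*(x-1)/(x+1) \<le> ln x"
proof -
  let ?f = "\<lambda>x::real. ln x - 2*(x-1)/(x+1)"
  have "?f 1 \<le> ?f x"
  proof (rule DERIV_nonneg_imp_nondecreasing[OF assms])
    fix t :: real assume t1: "1 \<le> t" and t2: "t \<le> x"
    note t = t1 t2
    have "(?f has_real_derivative (1/t - 4/(t+1)^2)) (at t)"
      using t by (auto intro!: derivative_eq_intros simp: field_simps power2_eq_square)
    moreover have "1/t - 4/(t+1)^2 \<ge> 0"
    proof -
      have "1/t - 4/(t+1)^2 = (t-1)^2/(t*(t+1)^2)" using t unfolding power2_eq_square by (simp add: divide_simps) (simp add: algebra_simps)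
      also have "\<dots> \<ge> 0" using t by simp
      finally show ?thesis .
    qed
    ultimately show "\<exists>y. (?f has_real_derivative y) (at t) \<and> 0 \<le> y" by blast
  qed
  then show ?thesis by simp
qed

lemma ln2_gt: "ln (2::real) > 0.685"
proof -
  have "ln (2::real) = ln (4/3) + ln (3/2)" using ln_mult[of "4/3::real" "3/2"] by simp
  moreover have "ln (4/3::real) \<ge> 2/7" using ln_lower_aux[of "4/3"] by simp
  moreover have "ln (3/2::real) \<ge> 2/5" using ln_lower_aux[of "3/2"] by simp
  ultimately show ?thesis by simp
qed

lemma ycos_le_sin: assumes "0 \<le> y" "y \<le> pi/2" shows "y * cos y \<le> sin y"
proof -
  let ?f = "\<lambda>y. sin y - y * cos y"
  have "?f 0 \<le> ?f y"
  proof (rule DERIV_nonneg_imp_nondecreasing[OF assms(1)])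
    fix t :: real assume t1: "0 \<le> t" and t2: "t \<le> y"
    note t = t1 t2
    have "(?f has_real_derivative (t * sin t)) (at t)"
      by (auto intro!: derivative_eq_intros simp: field_simps)
    moreover have "t * sin t \<ge> 0" using t assms by (intro mult_nonneg_nonneg sin_ge_zero) auto
    ultimately show "\<exists>d. (?f has_real_derivative d) (at t) \<and> 0 \<le> d" by blast
  qed
  then show ?thesis by simp
qed

lemma cot_le: assumes "0 < y" "y < pi/2" shows "cos y / sin y \<le> 1 / y"
proof -
  have "sin y > 0" using assms by (intro sin_gt_zero) auto
  then show ?thesis using ycos_le_sin[of y] assms by (simp add: field_simps)
qed

definition Hodd :: "nat \<Rightarrow> real" where "Hodd L = (\<Sum>j=1..L. 1 / (2*real j - 1))"

lemma Hodd_bound: "L \<ge> 1 \<Longrightarrow> Hodd L \<le> 1 + ln (real L) / 2"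
proof (induction L rule: dec_induct)
  case base then show ?case by (simp add: Hodd_def)
next
  case (step L)
  have "Hodd (Suc L) = Hodd L + 1/(2*real L + 1)" by (simp add: Hodd_def)
  moreover have "2/(2*real L+1) \<le> ln ((real L+1)/real L)"
  proof -
    have "2*((real L+1)/real L - 1)/((real L+1)/real L + 1) = 2/(2*real L+1)"
      using step by (simp add: field_simps)
    then show ?thesis using ln_lower_aux[of "(real L+1)/real L"] step by simp
  qed
  moreover have "ln ((real L+1)/real L) = ln (real (Suc L)) - ln (real L)"
    using step by (simp add: ln_div)
  ultimately show ?case using step by simp
qed




lemma norm_1_minus_cis: "norm (1 - cis (2*t)) = 2 * \<bar>sin t\<bar>"
proof -
  have "(norm (1 - cis (2*t)))^2 = (1 - cos (2*t))^2 + (sin (2*t))^2"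
    by (simp add: cmod_power2 cis.ctr)
  also have "\<dots> = (2 * sin t)^2 * ((sin t)^2 + (cos t)^2)"
    unfolding cos_double_sin sin_double by algebra
  also have "\<dots> = (2 * \<bar>sin t\<bar>)^2" by simp
  finally show ?thesis
    by (rule power2_eq_imp_eq) auto
qed

lemma norm_1_plus_cis: "norm (1 + cis (2*t)) = 2 * \<bar>cos t\<bar>"
proof -
  have "(norm (1 + cis (2*t)))^2 = (1 + cos (2*t))^2 + (sin (2*t))^2"
    by (simp add: cmod_power2 cis.ctr)
  also have "\<dots> = (2 * cos t)^2 * ((sin t)^2 + (cos t)^2)"
    unfolding cos_double_cos sin_double by algebra
  also have "\<dots> = (2 * \<bar>cos t\<bar>)^2" by simp
  finally show ?thesis
    by (rule power2_eq_imp_eq) auto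
qed




lemma ratio_bound:
  assumes "odd N" "1 \<le> k" "k < N"
  shows "norm (1 - cis (2*pi*k/N)) / (2 * norm (1 + cis (2*pi*k/N))) \<le> N / (pi * \<bar>real N - 2*real k\<bar>)"
proof -
  define t where "t = pi*k/N"
  define s where "s = pi/2 - t"
  define y where "y = \<bar>s\<bar>"
  have N0: "real N > 0" using assms by simp
  have ne: "real N - 2*real k \<noteq> 0"
  proof
    assume "real N - 2*real k = 0" then have "N = 2*k" by linarith
    then show False using assms by simp
  qed
  have s_eq: "s = pi * (real N - 2*real k) / (2*N)" unfolding s_def t_def using N0 by (simp add: field_simps)
  have y_eq: "y = pi * \<bar>real N - 2*real k\<bar> / (2*N)" unfolding y_def s_eq using N0 by (simp add: abs_mult abs_divide)
  have ypos: "y > 0" unfolding y_eq using ne N0 by simp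
  have "\<bar>real N - 2*real k\<bar> < N" using assms by auto
  then have ylt: "y < pi/2" unfolding y_eq using N0 by (simp add: field_simps)
  have siny: "sin y > 0" using ypos ylt by (intro sin_gt_zero) auto
  have cosy: "cos y > 0" using ypos ylt by (intro cos_gt_zero) auto
  have e1: "2*pi*k/N = 2*t" unfolding t_def by simp
  have "\<bar>sin t\<bar> = cos y"
  proof -
    have "sin t = cos s" unfolding s_def by (simp add: cos_sin_eq)
    moreover have "cos y = cos s" unfolding y_def by (simp add: abs_if)
    ultimately show ?thesis using cosy by simp
  qed
  moreover have "\<bar>cos t\<bar> = sin y"
  proof -
    have "cos t = sin s" unfolding s_def by (simp add: sin_cos_eq)
    then show ?thesis unfolding y_def using siny y_def by (auto simp: abs_if)
  qed
  ultimately have "norm (1 - cis (2*pi*k/N)) / (2 * norm (1 + cis (2*pi*k/N))) = cos y / (2 * sin y)"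
    unfolding e1 norm_1_minus_cis norm_1_plus_cis by simp
  also have "\<dots> \<le> 1 / (2*y)" using cot_le[OF ypos ylt] siny by (simp add: field_simps)
  also have "\<dots> = N / (pi * \<bar>real N - 2*real k\<bar>)" unfolding y_eq using N0 by simp
  finally show ?thesis .
qed

lemma sum_abs_odd: "(\<Sum>k=1..2*L. 1 / \<bar>real (2*L+1) - 2*real k\<bar>) = 2 * Hodd L"
proof -
  have split: "{1..2*L} = {1..L} \<union> {L+1..2*L}" by auto
  have "(\<Sum>k=1..2*L. 1 / \<bar>real (2*L+1) - 2*real k\<bar>) =
        (\<Sum>k=1..L. 1 / \<bar>real (2*L+1) - 2*real k\<bar>) + (\<Sum>k=L+1..2*L. 1 / \<bar>real (2*L+1) - 2*real k\<bar>)"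
    unfolding split by (rule sum.union_disjoint) auto
  also have "(\<Sum>k=1..L. 1 / \<bar>real (2*L+1) - 2*real k\<bar>) = Hodd L"
    unfolding Hodd_def
    by (rule sum.reindex_bij_witness[where i="\<lambda>j. L+1-j" and j="\<lambda>k. L+1-k"]) (auto simp: of_nat_diff)
  also have "(\<Sum>k=L+1..2*L. 1 / \<bar>real (2*L+1) - 2*real k\<bar>) = Hodd L"
    unfolding Hodd_def
    by (rule sum.reindex_bij_witness[where i="\<lambda>j. L+j" and j="\<lambda>k. k-L"]) (auto simp: of_nat_diff)
  finally show ?thesis by simp
qed




lemma power_mod_eq: fixes x :: "'b::monoid_mult" assumes "x^Q = 1" shows "x^(n mod Q) = x^n"
proof -
  have "x^n = x^(n mod Q + Q*(n div Q))" by simp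
  also have "\<dots> = x^(n mod Q)" by (simp only: power_add power_mult assms power_one mult_1_right)
  finally show ?thesis by (rule sym)
qed

locale fsetup =
  fixes \<alpha> :: "'a::{field,finite}" and m :: nat
  assumes m1: "m \<ge> 1" and cardK: "CARD('a) = 2^(2*m)" and prim: "primitive_element \<alpha>"
begin

definition "q = (2::nat)^m"
definition "Q = q*q - 1"
definition "N = q - 1"
definition "M = q + 1"
definition "L = (2::nat)^(m-1) - 1"

lemma q2: "q \<ge> 2" unfolding q_def using m1 power_increasing[of 1 m "2::nat"] by simp

lemma card_q: "CARD('a) = q*q" unfolding q_def cardK by (simp add: power_mult power2_eq_square mult.commute)

lemma Q_NM: "Q = N*M" unfolding Q_def N_def M_def using q2 by (simp add: algebra_simps)
lemma M_eq: "M = N + 2" unfolding N_def M_def using q2 by simp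
lemma N_L: "N = 2*L + 1"
proof -
  obtain k where k: "m = Suc k" using m1 by (cases m) auto
  have "q = 2 * 2^(m-1)" unfolding q_def by (simp add: k)
  moreover have "(2::nat)^(m-1) \<ge> 1" by simp
  ultimately show ?thesis unfolding N_def L_def by linarith
qed
lemma N_odd: "odd N" using N_L by simp
lemma N_pos: "N \<ge> 1" using N_L by simp
lemma Q_pos: "Q \<ge> 1" using Q_NM N_pos M_eq by simp
lemma card_Q: "CARD('a) = Q + 1" unfolding card_q Q_def using q2 by simp

lemma alpha_nz: "\<alpha> \<noteq> 0"
proof
  assume a0: "\<alpha> = 0"
  have c2: "card ({0,1}::'a set) \<le> 2" by (simp add: card_insert_if)
  have "q*q \<ge> 2*2" using q2 by (intro mult_le_mono) auto
  then have c4: "CARD('a) \<ge> 4" using card_q by simp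
  have "({0,1}::'a set) \<noteq> UNIV"
  proof
    assume "({0,1}::'a set) = UNIV" then have "CARD('a) \<le> 2" using c2 by simp
    then show False using c4 by simp
  qed
  then obtain x :: 'a where x: "x \<noteq> 0" "x \<noteq> 1" by blast
  then obtain k where "x = \<alpha>^k" using prim unfolding primitive_element_def by blast
  then show False using x a0 by (cases k) auto
qed


lemma card_nz: "card (UNIV - {0::'a}) = Q" using card_Q by (simp add: card_Diff_singleton)

lemma alpha_period: "\<exists>d>0. \<alpha>^d = 1"
proof -
  have "\<not> inj_on (\<lambda>k. \<alpha>^k) {..Q}"
  proof
    assume inj: "inj_on (\<lambda>k. \<alpha>^k) {..Q}"
    have "(\<lambda>k. \<alpha>^k) ` {..Q} \<subseteq> UNIV - {0}" using alpha_nz by auto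
    then have "card ((\<lambda>k. \<alpha>^k) ` {..Q}) \<le> Q" using card_nz by (metis card_mono finite)
    then show False using card_image[OF inj] by simp
  qed
  then obtain i j where ij: "i \<le> Q" "j \<le> Q" "i \<noteq> j" "\<alpha>^i = \<alpha>^j" unfolding inj_on_def by auto
  have "\<exists>i j. i < j \<and> \<alpha>^i = \<alpha>^j" using ij by (metis linorder_neqE_nat)
  then obtain i j where ij: "i < j" "\<alpha>^i = \<alpha>^j" by blast
  have "\<alpha>^i * \<alpha>^(j-i) = \<alpha>^i * 1"
    proof -
      have "\<alpha>^i * \<alpha>^(j-i) = \<alpha>^(i + (j-i))" by (simp add: power_add)
      also have "\<dots> = \<alpha>^j" using ij by simp
      finally show ?thesis using ij by simp
    qed
  then have "\<alpha>^(j-i) = 1" using alpha_nz by simp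
  then show ?thesis using ij by (intro exI[of _ "j-i"]) auto
qed

definition "ordd = (LEAST d. 0 < d \<and> \<alpha>^d = 1)"

lemma ordd: "0 < ordd" "\<alpha>^ordd = 1" "\<And>e. 0 < e \<Longrightarrow> e < ordd \<Longrightarrow> \<alpha>^e \<noteq> 1"
proof -
  obtain d where "0 < d \<and> \<alpha>^d = 1" using alpha_period by blast
  then have "0 < ordd \<and> \<alpha>^ordd = 1" unfolding ordd_def by (rule LeastI)
  then show "0 < ordd" "\<alpha>^ordd = 1" by auto
  show "\<And>e. 0 < e \<Longrightarrow> e < ordd \<Longrightarrow> \<alpha>^e \<noteq> 1" unfolding ordd_def using not_less_Least by blast
qed

lemma bij_ordd: "bij_betw (\<lambda>k. \<alpha>^k) {..<ordd} (UNIV - {0})"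
proof (rule bij_betw_imageI)
  show "inj_on (\<lambda>k. \<alpha>^k) {..<ordd}"
  proof (rule inj_onI, rule ccontr)
    fix i j assume ij: "i \<in> {..<ordd}" "j \<in> {..<ordd}" "\<alpha>^i = \<alpha>^j" "i \<noteq> j"
    have "\<exists>a b. a < b \<and> b < ordd \<and> \<alpha>^a = \<alpha>^b" using ij by (metis lessThan_iff linorder_neqE_nat)
    then obtain a b where ab: "a < b" "b < ordd" "\<alpha>^a = \<alpha>^b" by blast
    have "\<alpha>^a * \<alpha>^(b-a) = \<alpha>^a * 1"
    proof -
      have "\<alpha>^a * \<alpha>^(b-a) = \<alpha>^(a + (b-a))" by (simp add: power_add)
      also have "\<dots> = \<alpha>^b" using ab by simp
      finally show ?thesis using ab by simp
    qed
    then have "\<alpha>^(b-a) = 1" using alpha_nz by simp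
    then show False using ordd(3)[of "b-a"] ab by simp
  qed
  show "(\<lambda>k. \<alpha>^k) ` {..<ordd} = UNIV - {0}"
  proof
    show "(\<lambda>k. \<alpha>^k) ` {..<ordd} \<subseteq> UNIV - {0}" using alpha_nz by auto
    show "UNIV - {0} \<subseteq> (\<lambda>k. \<alpha>^k) ` {..<ordd}"
    proof
      fix x assume "x \<in> UNIV - {0::'a}"
      then obtain k where "x = \<alpha>^k" using prim unfolding primitive_element_def by blast
      then have "x = \<alpha>^(k mod ordd)" using power_mod_eq[OF ordd(2)] by simp
      moreover have "k mod ordd < ordd" using ordd(1) by simp
      ultimately show "x \<in> (\<lambda>k. \<alpha>^k) ` {..<ordd}" by blast
    qed
  qed
qed

lemma ordd_Q: "ordd = Q"
  using bij_betw_same_card[OF bij_ordd] card_nz by simp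

lemma alpha_Q: "\<alpha>^Q = 1" using ordd(2) ordd_Q by simp

lemma bij_alpha: "bij_betw (\<lambda>k. \<alpha>^k) {..<Q} (UNIV - {0})" using bij_ordd ordd_Q by simp

lemma alpha_pow_mod: "\<alpha>^(k mod Q) = \<alpha>^k" by (rule power_mod_eq[OF alpha_Q])

lemma alpha_eq_iff: "\<alpha>^i = \<alpha>^j \<longleftrightarrow> i mod Q = j mod Q"
proof
  assume "\<alpha>^i = \<alpha>^j"
  then have "\<alpha>^(i mod Q) = \<alpha>^(j mod Q)" by (simp add: alpha_pow_mod)
  moreover have "i mod Q < Q" "j mod Q < Q" using Q_pos by auto
  ultimately show "i mod Q = j mod Q" using bij_alpha unfolding bij_betw_def inj_on_def by blast
next
  assume "i mod Q = j mod Q" then show "\<alpha>^i = \<alpha>^j" by (metis alpha_pow_mod)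
qed

lemma sum_nz: "(\<Sum>x\<in>UNIV-{0}. f x) = (\<Sum>j<Q. f (\<alpha>^j))"
  using sum.reindex_bij_betw[OF bij_alpha, of f] by simp

lemma nz_pow: "x \<noteq> 0 \<Longrightarrow> \<exists>j<Q. x = \<alpha>^j"
  using bij_alpha unfolding bij_betw_def by auto

end



definition chi :: "('a::ab_group_add \<Rightarrow> bool) \<Rightarrow> 'a \<Rightarrow> complex" where
  "chi a x = (if a x \<noteq> a 0 then -1 else 1)"

lemma chi0: "chi a 0 = 1" by (simp add: chi_def)

lemma chi_add: assumes "affine_bool a" shows "chi a (x+y) = chi a x * chi a y"
  using assms unfolding affine_bool_def chi_def by (cases "a x"; cases "a y"; cases "a 0"; simp)

lemma chi_pm: "chi a x = 1 \<or> chi a x = -1" by (simp add: chi_def)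

lemma chi_sq: "chi a x * chi a x = 1" by (simp add: chi_def)

lemma norm_chi: "norm (chi a x) = 1" by (simp add: chi_def)

lemma chi_minus: assumes "affine_bool a" shows "chi a (-x) = chi a x"
proof -
  have "chi a (x + -x) = chi a x * chi a (-x)" by (rule chi_add[OF assms])
  then have "chi a x * chi a (-x) = 1" by (simp add: chi0)
  then have "chi a x * chi a x * chi a (-x) = chi a x" by (simp add: mult.assoc)
  then show ?thesis by (simp add: chi_sq)
qed

lemma chi_sum_zero:
  fixes a :: "'a::{ab_group_add,finite} \<Rightarrow> bool"
  assumes "affine_bool a" "chi a x0 \<noteq> 1"
  shows "(\<Sum>x\<in>UNIV. chi a x) = 0"
proof -
  have "(\<Sum>x\<in>UNIV. chi a x) = (\<Sum>x\<in>UNIV. chi a (x + x0))"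
    by (rule sum.reindex_bij_witness[where i="\<lambda>y. y + x0" and j="\<lambda>y. y - x0"]) auto
  also have "\<dots> = chi a x0 * (\<Sum>x\<in>UNIV. chi a x)"
    by (simp add: chi_add[OF assms(1)] sum_distrib_left mult.commute)
  finally have "(1 - chi a x0) * (\<Sum>x\<in>UNIV. chi a x) = 0" by (simp add: algebra_simps)
  then show ?thesis using assms(2) by simp
qed

lemma chi_sum_mult:
  fixes a :: "'a::{field,finite} \<Rightarrow> bool"
  assumes "c \<noteq> 0"
  shows "(\<Sum>x\<in>UNIV. chi a (x * c)) = (\<Sum>x\<in>UNIV. chi a x)"
  by (rule sum.reindex_bij_witness[where i="\<lambda>y. y / c" and j="\<lambda>y. y * c"]) (use assms in auto)

context fsetup
begin

definition "\<omega> = cis (2*pi/N)"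

lemma omega_pow: "\<omega>^t = cis (2*pi*t/N)"
  unfolding \<omega>_def by (induct t) (auto simp: cis_mult add_divide_distrib algebra_simps)

lemma omega_pow_exp: "\<omega>^t = exp(2 * of_real pi * \<i> * of_nat t / of_nat N)"
  unfolding omega_pow cis_conv_exp by (simp add: field_simps)

lemma omega_eq_iff: "\<omega>^i = \<omega>^j \<longleftrightarrow> i mod N = j mod N"
  unfolding omega_pow_exp using complex_root_unity_eq[OF N_pos] by simp

lemma omega_1_iff: "\<omega>^i = 1 \<longleftrightarrow> N dvd i"
  unfolding omega_pow_exp using complex_root_unity_eq_1[OF N_pos] by simp

lemma norm_omega_pow: "norm (\<omega>^t) = 1" unfolding omega_pow by simp

lemma cnj_omega_mult: "cnj (\<omega>^t) * \<omega>^t = 1"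
  unfolding omega_pow by (simp add: cis_cnj cis_mult)

lemma geom_zero: fixes z :: complex assumes "z^n = 1" "z \<noteq> 1" shows "(\<Sum>j<n. z^j) = 0"
  using assms by (simp add: sum_gp_strict)

lemma sum_shift_mod:
  assumes "l < Q"
  shows "(\<Sum>s<Q. f ((l + s) mod Q)) = (\<Sum>j<Q. f j)"
proof (rule sum.reindex_bij_witness[where i="\<lambda>j. (j + (Q - l)) mod Q" and j="\<lambda>s. (l+s) mod Q"])
  fix s assume s: "s \<in> {..<Q}"
  have "((l + s) mod Q + (Q - l)) mod Q = (l + s + (Q - l)) mod Q" by (simp add: mod_add_left_eq)
  also have "l + s + (Q - l) = s + Q" using assms by simp
  finally show "((l + s) mod Q + (Q - l)) mod Q = s" using s by simp
next
  fix j assume j: "j \<in> {..<Q}"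
  have "(l + (j + (Q - l)) mod Q) mod Q = (l + (j + (Q - l))) mod Q" by (simp add: mod_add_right_eq)
  also have "l + (j + (Q - l)) = j + Q" using assms by simp
  finally show "(l + (j + (Q - l)) mod Q) mod Q = j" using j by simp
qed (use Q_pos in auto)

definition "G a k = (\<Sum>j<Q. \<omega>^(k*j) * chi a (\<alpha>^j))"

lemma omega_Q: "(\<omega>^k)^Q = 1"
  unfolding power_mult[symmetric] omega_1_iff Q_NM by simp

lemma sum_chi_line:
  assumes "affine_bool a" "\<not> (\<forall>x. chi a x = 1)"
  shows "(\<Sum>l<Q. chi a (\<alpha>^l * c)) = (if c = 0 then of_nat Q else -1)"
proof (cases "c = 0")
  case True then show ?thesis by (simp add: chi0)
next
  case False
  have "(\<Sum>l<Q. chi a (\<alpha>^l * c)) = (\<Sum>x\<in>UNIV-{0}. chi a (x * c))" by (rule sum_nz[symmetric])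
  also have "\<dots> = (\<Sum>x\<in>UNIV. chi a (x * c)) - chi a (0 * c)"
    by (simp add: sum_diff1)
  also have "\<dots> = -1" using chi_sum_mult[OF False, of a] chi_sum_zero[OF assms(1)] assms(2)
    by (auto simp: chi0)
  finally show ?thesis using False by simp
qed

lemma gauss_bound:
  assumes "affine_bool a" "0 < k" "k < N"
  shows "norm (G a k) \<le> q"
proof -
  define z where "z = \<omega>^k"
  have zQ: "z^Q = 1" unfolding z_def by (rule omega_Q)
  have z1: "z \<noteq> 1" unfolding z_def omega_1_iff using assms by auto
  have Gz: "G a k = (\<Sum>j<Q. z^j * chi a (\<alpha>^j))" unfolding G_def z_def by (simp add: power_mult)
  show ?thesis
  proof (cases "\<forall>x. chi a x = 1")
    case True
    then have "G a k = 0" unfolding Gz using geom_zero[OF zQ z1] by simp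
    then show ?thesis by simp
  next
    case False
    have zc: "cnj (z^l) * z^l = 1" for l unfolding z_def power_mult[symmetric] by (rule cnj_omega_mult)
    have shift: "G a k = (\<Sum>s<Q. z^(l+s) * chi a (\<alpha>^(l+s)))" if "l < Q" for l
    proof -
      have "G a k = (\<Sum>s<Q. z^((l+s) mod Q) * chi a (\<alpha>^((l+s) mod Q)))"
        unfolding Gz using sum_shift_mod[OF that, of "\<lambda>j. z^j * chi a (\<alpha>^j)"] by simp
      also have "\<dots> = (\<Sum>s<Q. z^(l+s) * chi a (\<alpha>^(l+s)))"
        by (simp add: power_mod_eq[OF zQ] alpha_pow_mod)
      finally show ?thesis .
    qed
    have "G a k * cnj (G a k) = (\<Sum>l<Q. cnj (z^l * chi a (\<alpha>^l)) * G a k)"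
      unfolding Gz by (simp add: sum_distrib_left sum_distrib_right mult.commute cnj_sum)
    also have "\<dots> = (\<Sum>l<Q. \<Sum>s<Q. z^s * chi a (\<alpha>^l * (\<alpha>^s - 1)))"
    proof (rule sum.cong[OF refl])
      fix l assume l: "l \<in> {..<Q}"
      have cchi: "cnj (chi a y) = chi a y" for y by (simp add: chi_def)
      have "cnj (z^l * chi a (\<alpha>^l)) * G a k = (\<Sum>s<Q. cnj (z^l * chi a (\<alpha>^l)) * (z^(l+s) * chi a (\<alpha>^(l+s))))"
        using shift[of l] l by (simp add: sum_distrib_left)
      also have "\<dots> = (\<Sum>s<Q. z^s * chi a (\<alpha>^l * (\<alpha>^s - 1)))"
      proof (rule sum.cong[OF refl])
        fix s
        have "chi a (\<alpha>^l) * chi a (\<alpha>^(l+s)) = chi a (uminus (\<alpha>^l)) * chi a (\<alpha>^l * \<alpha>^s)"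
          by (simp add: chi_minus[OF assms(1)] power_add)
        also have "\<dots> = chi a (\<alpha>^l * (\<alpha>^s - 1))"
          by (simp add: chi_add[OF assms(1), symmetric] algebra_simps)
        finally have e: "chi a (\<alpha>^l) * chi a (\<alpha>^(l+s)) = chi a (\<alpha>^l * (\<alpha>^s - 1))" .
        have zc': "cnj z ^ l * z ^ l = 1" using zc[of l] by simp
        have "cnj (z^l * chi a (\<alpha>^l)) * (z^(l+s) * chi a (\<alpha>^(l+s)))
              = (cnj z ^ l * z ^ l) * z^s * (chi a (\<alpha>^l) * chi a (\<alpha>^(l+s)))"
          by (simp add: cchi power_add mult_ac)
        also have "\<dots> = z^s * chi a (\<alpha>^l * (\<alpha>^s - 1))" by (simp only: zc' e) simp
        finally show "cnj (z^l * chi a (\<alpha>^l)) * (z^(l+s) * chi a (\<alpha>^(l+s))) = z^s * chi a (\<alpha>^l * (\<alpha>^s - 1))" .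
      qed
      finally show "cnj (z^l * chi a (\<alpha>^l)) * G a k = (\<Sum>s<Q. z^s * chi a (\<alpha>^l * (\<alpha>^s - 1)))" .
    qed
    also have "\<dots> = (\<Sum>s<Q. z^s * (\<Sum>l<Q. chi a (\<alpha>^l * (\<alpha>^s - 1))))"
      by (subst sum.swap) (simp add: sum_distrib_left)
    also have "\<dots> = (\<Sum>s<Q. z^s * (if s = 0 then of_nat Q else -1))"
    proof (rule sum.cong[OF refl])
      fix s assume s: "s \<in> {..<Q}"
      have "\<alpha>^s - 1 = 0 \<longleftrightarrow> s = 0"
      proof -
        have "\<alpha>^s - 1 = 0 \<longleftrightarrow> \<alpha>^s = \<alpha>^0" by simp
        also have "\<dots> \<longleftrightarrow> s mod Q = 0 mod Q" by (rule alpha_eq_iff)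
        finally show ?thesis using s by simp
      qed
      then show "z^s * (\<Sum>l<Q. chi a (\<alpha>^l * (\<alpha>^s - 1))) = z^s * (if s = 0 then of_nat Q else -1)"
        using sum_chi_line[OF assms(1) False, of "\<alpha>^s - 1"] by simp
    qed
    also have "\<dots> = of_nat Q + 1"
    proof -
      have "(\<Sum>s<Q. z^s * (if s = 0 then of_nat Q else -1)) = z^0 * of_nat Q + (\<Sum>s\<in>{..<Q}-{0}. z^s * (if s = 0 then of_nat Q else -1))"
        using Q_pos by (subst sum.remove[of _ 0]) auto
      also have "(\<Sum>s\<in>{..<Q}-{0}. z^s * (if s = 0 then of_nat Q else -1)) = - (\<Sum>s\<in>{..<Q}-{0}. z^s)"
        by (simp add: sum_negf[symmetric])
      finally have "(\<Sum>s<Q. z^s * (if s = 0 then of_nat Q else -1)) = of_nat Q - (\<Sum>s\<in>{..<Q}-{0}. z^s)" by simp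
      moreover have "(\<Sum>s\<in>{..<Q}-{0}. z^s) = (\<Sum>s<Q. z^s) - 1"
        using Q_pos by (simp add: sum_diff1)
      ultimately show ?thesis using geom_zero[OF zQ z1] by simp
    qed
    finally have "complex_of_real ((norm (G a k))^2) = of_nat (q*q)"
      unfolding complex_norm_square using card_Q card_q by simp
    moreover have "complex_of_nat (q*q) = complex_of_real ((real q)^2)" by (simp add: power2_eq_square)
    ultimately have "(norm (G a k))^2 = (real q)^2" using of_real_eq_iff by metis
    then have "norm (G a k) = real q" by (rule power2_eq_imp_eq) auto
    then show ?thesis by simp
  qed
qed

end



definition Wf :: "nat \<Rightarrow> complex" where
  "Wf r = (if r = 0 then 1/2 else if even r then 1 else 0)"

lemma sumW: "(\<Sum>r<2*K+1. Wf r * w^r) = (\<Sum>s<K+1. (w^2)^s) - 1/2"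
proof (induction K)
  case 0 then show ?case by (simp add: Wf_def)
next
  case (Suc K)
  have e: "2 * Suc K + 1 = Suc (Suc (2*K+1))" by simp
  have "(\<Sum>r<2 * Suc K + 1. Wf r * w^r) = (\<Sum>r<2*K+1. Wf r * w^r) + Wf (2*K+1) * w^(2*K+1) + Wf (2*K+2) * w^(2*K+2)"
    unfolding e by simp
  also have "\<dots> = (\<Sum>s<K+1. (w^2)^s) - 1/2 + w^(2*K+2)" using Suc by (simp add: Wf_def)
  also have "\<dots> = (\<Sum>s<Suc K+1. (w^2)^s) - 1/2" by (simp add: power_mult[symmetric] algebra_simps)
  finally show ?case .
qed

lemma geo2: "(1+w) * (\<Sum>s<K+1. (w^2)^s) = (\<Sum>t<2*K+2. (w::complex)^t)"
proof (induction K)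
  case 0 then show ?case by (simp add: numeral_2_eq_2)
next
  case (Suc K)
  have e: "2 * Suc K + 2 = Suc (Suc (2*K+2))" by simp
  have "(1+w) * (\<Sum>s<Suc K+1. (w^2)^s) = (1+w) * (\<Sum>s<K+1. (w^2)^s) + (1+w) * (w^2)^(K+1)" by (simp add: algebra_simps)
  also have "\<dots> = (\<Sum>t<2*K+2. w^t) + w^(2*K+2) + w^(2*K+3)"
  proof -
    have "(w^2)^(K+1) = w^(2*K+2)" using power_mult[of w 2 "K+1"] by simp
    moreover have "w^(2*K+3) = w * w^(2*K+2)" by (simp add: numeral_3_eq_3 power2_eq_square)
    ultimately have "(1+w) * (w^2)^(K+1) = w^(2*K+2) + w^(2*K+3)" by (simp add: algebra_simps)
    then show ?thesis using Suc by simp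
  qed
  also have "\<dots> = (\<Sum>t<2 * Suc K + 2. w^t)" unfolding e by (simp add: numeral_3_eq_3)
  finally show ?case .
qed

context fsetup
begin

definition "c k = (\<Sum>r<N. Wf r * cnj (\<omega>^(k*r)))"

lemma fourier: "Wf (j mod N) = (1/of_nat N) * (\<Sum>k<N. c k * \<omega>^(k*j))"
proof -
  have inner: "(\<Sum>k<N. cnj (\<omega>^(k*r)) * \<omega>^(k*j)) = (if r = j mod N then of_nat N else 0)" if r: "r < N" for r
  proof -
    define u where "u = cnj (\<omega>^r) * \<omega>^j"
    have "cnj (\<omega>^(k*r)) * \<omega>^(k*j) = u^k" for k
      unfolding u_def by (simp add: power_mult_distrib power_mult mult.commute[of k])
    then have "(\<Sum>k<N. cnj (\<omega>^(k*r)) * \<omega>^(k*j)) = (\<Sum>k<N. u^k)" by simp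
    moreover have uN: "u^N = 1"
    proof -
      have oN: "\<omega>^N = 1" using omega_1_iff[of N] by simp
      have "u^N = cnj ((\<omega>^N)^r) * (\<omega>^N)^j" unfolding u_def complex_cnj_power power_mult_distrib
        by (simp only: power_mult[symmetric] mult.commute)
      then show ?thesis unfolding oN by simp
    qed
    moreover have "u = 1 \<longleftrightarrow> r = j mod N"
    proof -
      have "u = 1 \<longleftrightarrow> \<omega>^j = \<omega>^r"
      proof
        assume "u = 1"
        have "\<omega>^j = \<omega>^j * (cnj (\<omega>^r) * \<omega>^r)" using cnj_omega_mult[of r] by simp
        also have "\<dots> = u * \<omega>^r" unfolding u_def by (simp only: mult_ac)
        finally show "\<omega>^j = \<omega>^r" using \<open>u = 1\<close> by simp
      next
        assume "\<omega>^j = \<omega>^r" then show "u = 1" unfolding u_def using cnj_omega_mult[of r] by simp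
      qed
      also have "\<dots> \<longleftrightarrow> r = j mod N" unfolding omega_eq_iff using r by auto
      finally show ?thesis .
    qed
    ultimately show ?thesis using geom_zero[of u N] by auto
  qed
  have "(\<Sum>k<N. c k * \<omega>^(k*j)) = (\<Sum>k<N. \<Sum>r<N. Wf r * (cnj (\<omega>^(k*r)) * \<omega>^(k*j)))"
    unfolding c_def by (simp add: sum_distrib_right mult.assoc)
  also have "\<dots> = (\<Sum>r<N. Wf r * (\<Sum>k<N. cnj (\<omega>^(k*r)) * \<omega>^(k*j)))"
    by (subst sum.swap) (simp add: sum_distrib_left)
  also have "\<dots> = (\<Sum>r<N. if r = j mod N then Wf r * of_nat N else 0)"
  proof (rule sum.cong[OF refl])
    fix r assume rN: "r \<in> {..<N}"
    then have rN': "r < N" by simp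
    show "Wf r * (\<Sum>k<N. cnj (\<omega>^(k*r)) * \<omega>^(k*j)) = (if r = j mod N then Wf r * of_nat N else 0)"
      unfolding inner[OF rN'] by (auto simp: Wf_def)
  qed
  also have "\<dots> = Wf (j mod N) * of_nat N" using N_pos by (simp add: sum.delta')
  finally show ?thesis using N_pos by simp
qed

lemma c0: "c 0 = of_nat N / 2"
proof -
  have "c 0 = (\<Sum>r<2*L+1. Wf r * 1^r)" unfolding c_def N_L by simp
  also have "\<dots> = of_nat (L+1) - 1/2" unfolding sumW by simp
  finally show ?thesis unfolding N_L by (simp add: field_simps)
qed

lemma c_formula:
  assumes "0 < k" "k < N"
  shows "c k = (1 - cnj (\<omega>^k)) / (2 * (1 + cnj (\<omega>^k)))"
proof -
  define w where "w = cnj (\<omega>^k)"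
  have wN: "w^N = 1"
  proof -
    have "w^N = cnj (\<omega>^(k*N))" unfolding w_def complex_cnj_power by (simp only: power_mult)
    also have "\<omega>^(k*N) = 1" using omega_1_iff[of "k*N"] by simp
    finally show ?thesis by simp
  qed
  have w1: "w \<noteq> 1"
  proof
    assume "w = 1" then have "\<omega>^k = 1" unfolding w_def by (metis complex_cnj_one complex_cnj_cnj)
    then show False using omega_1_iff assms by (auto dest: dvd_imp_le)
  qed
  have wm1: "1 + w \<noteq> 0"
  proof
    assume "1 + w = 0" then have "w = -1" by (simp add: add_eq_0_iff)
    then have "w^N = -1" using N_odd by simp
    then show False using wN by simp
  qed
  have "c k = (\<Sum>r<N. Wf r * w^r)" unfolding c_def w_def
    by (intro sum.cong refl) (metis complex_cnj_power power_mult mult.commute)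
  also have "\<dots> = (\<Sum>r<2*L+1. Wf r * w^r)" unfolding N_L ..
  also have "\<dots> = (\<Sum>s<L+1. (w^2)^s) - 1/2" by (rule sumW)
  also have "(\<Sum>s<L+1. (w^2)^s) = 1 / (1+w)"
  proof -
    have "(\<Sum>t<2*L+2. w^t) = (\<Sum>t<N. w^t) + w^N" unfolding N_L by simp
    also have "\<dots> = 1" using geom_zero[OF wN w1] wN by simp
    finally show ?thesis using geo2[of w L] wm1 by (simp add: field_simps)
  qed
  finally show ?thesis unfolding w_def[symmetric] using wm1 by (simp add: field_simps)
qed

lemma norm_c:
  assumes "0 < k" "k < N"
  shows "norm (c k) \<le> N / (pi * \<bar>real N - 2*real k\<bar>)"
proof -
  have "norm (1 - cnj (\<omega>^k)) = norm (1 - cis (2*pi*k/N))"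
    by (metis complex_cnj_diff complex_cnj_one complex_mod_cnj omega_pow)
  moreover have "norm (1 + cnj (\<omega>^k)) = norm (1 + cis (2*pi*k/N))"
    by (metis complex_cnj_add complex_cnj_one complex_mod_cnj omega_pow)
  moreover have "norm (c k) = norm (1 - cnj (\<omega>^k)) / (2 * norm (1 + cnj (\<omega>^k)))"
    unfolding c_formula[OF assms] norm_divide norm_mult by simp
  ultimately have "norm (c k) = norm (1 - cis (2*pi*k/N)) / (2 * norm (1 + cis (2*pi*k/N)))"
    by simp
  also have "\<dots> \<le> N / (pi * \<bar>real N - 2*real k\<bar>)"
    by (rule ratio_bound) (use assms N_odd in auto)
  finally show ?thesis .
qed

lemma sum_norm_c: "(\<Sum>k\<in>{1..<N}. norm (c k)) \<le> 2 * N / pi * Hodd L"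
proof -
  have "(\<Sum>k\<in>{1..<N}. norm (c k)) \<le> (\<Sum>k\<in>{1..<N}. N / (pi * \<bar>real N - 2*real k\<bar>))"
    by (rule sum_mono) (rule norm_c, auto)
  also have "\<dots> = N / pi * (\<Sum>k=1..2*L. 1 / \<bar>real (2*L+1) - 2*real k\<bar>)"
  proof -
    have "{1..<N} = {1..2*L}" unfolding N_L by auto
    then show ?thesis unfolding N_L by (simp add: sum_distrib_left)
  qed
  also have "\<dots> = 2 * N / pi * Hodd L" unfolding sum_abs_odd by simp
  finally show ?thesis .
qed

end



context fsetup
begin

definition "U = {(\<alpha> ^ (2^m - 1)) ^ k | k. True}"
definition "Gam = {(\<alpha> ^ (2^m + 1)) ^ i | i. 1 \<le> i \<and> i \<le> 2^(m-1) - 1}"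
definition "S1 = {y * z | y z. y \<in> Gam \<and> z \<in> U}"
definition "S2 = {(\<alpha> ^ (2^m - 1)) ^ i | i. i \<le> 2^(m-1)}"

lemma eqN: "(2::nat)^m - 1 = N" unfolding N_def q_def ..
lemma eqM: "(2::nat)^m + 1 = M" unfolding M_def q_def ..
lemma eqL: "(2::nat)^(m-1) - 1 = L" unfolding L_def ..

lemma U_alt: "U = {\<alpha>^(N*k) | k. True}" unfolding U_def eqN by (simp add: power_mult)
lemma Gam_alt: "Gam = {\<alpha>^(M*i) | i. 1 \<le> i \<and> i \<le> L}" unfolding Gam_def eqM eqL by (simp add: power_mult)

lemma mod_QN: "i mod Q = j mod Q \<Longrightarrow> i mod N = j mod N"
  by (metis Q_NM dvd_triv_left mod_mod_cancel)

lemma memU: "\<alpha>^j \<in> U \<longleftrightarrow> N dvd j"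
proof
  assume "\<alpha>^j \<in> U"
  then obtain k where "\<alpha>^j = \<alpha>^(N*k)" unfolding U_alt by blast
  then have "j mod N = (N*k) mod N" using alpha_eq_iff mod_QN by blast
  then show "N dvd j" by (simp add: dvd_eq_mod_eq_0)
next
  assume "N dvd j" then obtain t where "j = N*t" by blast
  then show "\<alpha>^j \<in> U" unfolding U_alt by blast
qed

lemma twoL_lt: "2*L < N" using N_L by simp

lemma memS1: "\<alpha>^j \<in> S1 \<longleftrightarrow> even (j mod N) \<and> j mod N \<noteq> 0"
proof
  assume "\<alpha>^j \<in> S1"
  then obtain i k where ik: "1 \<le> i" "i \<le> L" "\<alpha>^j = \<alpha>^(M*i) * \<alpha>^(N*k)" unfolding S1_def Gam_alt U_alt by blast
  then have "\<alpha>^j = \<alpha>^(M*i + N*k)" by (simp add: power_add)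
  then have "j mod N = (M*i + N*k) mod N" using alpha_eq_iff mod_QN by blast
  also have "M*i + N*k = 2*i + N*(i+k)" unfolding M_eq by (simp add: algebra_simps)
  also have "(2*i + N*(i+k)) mod N = 2*i" using twoL_lt ik by simp
  finally show "even (j mod N) \<and> j mod N \<noteq> 0" using ik by simp
next
  assume h: "even (j mod N) \<and> j mod N \<noteq> 0"
  define i where "i = j mod N div 2"
  define t where "t = j div N"
  have ji: "j mod N = 2*i" unfolding i_def using h by simp
  have i1: "1 \<le> i" using h ji by simp
  have iL: "i \<le> L" using ji N_L mod_less_divisor[of N j] N_pos by simp
  have jt: "j = N*t + 2*i" unfolding t_def using ji by (metis div_mult_mod_eq mult.commute)
  define k where "k = t + (M-1)*i"
  have "M*i + N*k = j + Q*i" unfolding k_def jt Q_NM M_eq by (simp add: algebra_simps)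
  then have "\<alpha>^(M*i) * \<alpha>^(N*k) = \<alpha>^j * (\<alpha>^Q)^i" by (metis power_add power_mult)
  then have "\<alpha>^j = \<alpha>^(M*i) * \<alpha>^(N*k)" using alpha_Q by simp
  then show "\<alpha>^j \<in> S1" unfolding S1_def Gam_alt U_alt using i1 iL by blast
qed

lemma U_nz: "x \<in> U \<Longrightarrow> x \<noteq> 0" unfolding U_alt using alpha_nz by auto
lemma S1_nz: "x \<in> S1 \<Longrightarrow> x \<noteq> 0" unfolding S1_def Gam_alt U_alt using alpha_nz by auto
lemma S2_U: "S2 \<subseteq> U" unfolding S2_def U_def by blast

lemma S1_U: "x \<in> S1 \<Longrightarrow> x \<notin> U"
proof
  assume "x \<in> S1" "x \<in> U"
  then obtain j where "x = \<alpha>^j" using nz_pow S1_nz by blast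
  then show False using \<open>x \<in> S1\<close> \<open>x \<in> U\<close> memS1 memU by (auto simp: dvd_eq_mod_eq_0)
qed

lemma card_U: "card U \<le> M"
proof -
  have "U \<subseteq> (\<lambda>k. \<alpha>^(N*k)) ` {..<M}"
  proof
    fix x assume "x \<in> U"
    then obtain k where x: "x = \<alpha>^(N*k)" unfolding U_alt by blast
    have "(\<alpha>^N)^M = 1" using alpha_Q Q_NM by (simp add: power_mult[symmetric])
    then have "(\<alpha>^N)^(k mod M) = (\<alpha>^N)^k" by (rule power_mod_eq)
    then have "x = \<alpha>^(N*(k mod M))" unfolding x by (simp add: power_mult)
    moreover have "k mod M < M" using M_eq by simp
    ultimately show "x \<in> (\<lambda>k. \<alpha>^(N*k)) ` {..<M}" by blast
  qed
  then have "card U \<le> card ((\<lambda>k. \<alpha>^(N*k)) ` {..<M})" by (intro card_mono) auto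
  also have "\<dots> \<le> M" using card_image_le[of "{..<M}"] by simp
  finally show ?thesis .
qed

definition "wfun x = (if x \<in> S1 then 1 else 0) + (if x \<in> U then 1/2 else (0::complex))"
definition "rfun x = (if x \<in> S2 then 1 else 0) - (if x \<in> U then 1/2 else (0::complex))"

lemma wfun_pow: "wfun (\<alpha>^j) = Wf (j mod N)"
  unfolding wfun_def Wf_def memS1 memU by (auto simp: dvd_eq_mod_eq_0)

lemma wfun0: "wfun 0 = 0" unfolding wfun_def using S1_nz U_nz by auto

definition "X a = (1/of_nat N) * (\<Sum>k\<in>{1..<N}. c k * G a k)"

lemma sum_wfun: "(\<Sum>x\<in>UNIV. wfun x * chi a x) = ((\<Sum>x\<in>UNIV. chi a x) - 1) / 2 + X a"
proof -
  have "(\<Sum>x\<in>UNIV. wfun x * chi a x) = (\<Sum>x\<in>UNIV-{0}. wfun x * chi a x)"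
    by (rule sum.mono_neutral_right) (auto simp: wfun0)
  also have "\<dots> = (\<Sum>j<Q. Wf (j mod N) * chi a (\<alpha>^j))" unfolding sum_nz wfun_pow ..
  also have "\<dots> = (\<Sum>j<Q. (1/of_nat N) * (\<Sum>k<N. c k * \<omega>^(k*j)) * chi a (\<alpha>^j))"
    unfolding fourier ..
  also have "\<dots> = (1/of_nat N) * (\<Sum>k<N. c k * G a k)"
    unfolding G_def by (simp add: sum_distrib_left sum_distrib_right mult_ac sum.swap[of _ "{..<Q}"])
  also have "(\<Sum>k<N. c k * G a k) = c 0 * G a 0 + (\<Sum>k\<in>{1..<N}. c k * G a k)"
  proof -
    have "{..<N} = insert 0 {1..<N}" using N_pos by auto
    then show ?thesis by simp
  qed
  also have "G a 0 = (\<Sum>x\<in>UNIV. chi a x) - 1"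
  proof -
    have "G a 0 = (\<Sum>x\<in>UNIV-{0}. chi a x)" unfolding G_def sum_nz by simp
    also have "\<dots> = (\<Sum>x\<in>UNIV. chi a x) - chi a 0" by (simp add: sum_diff1)
    finally show ?thesis by (simp add: chi0)
  qed
  finally show ?thesis unfolding c0 X_def using N_pos by (simp add: field_simps)
qed

lemma norm_X: assumes "affine_bool a" shows "norm (X a) \<le> 2 * q / pi * Hodd L"
proof -
  have "norm (\<Sum>k\<in>{1..<N}. c k * G a k) \<le> (\<Sum>k\<in>{1..<N}. norm (c k) * q)"
  proof (rule order_trans[OF norm_sum sum_mono])
    fix k assume "k \<in> {1..<N}"
    then have "norm (G a k) \<le> q" using gauss_bound[OF assms] by auto
    then show "norm (c k * G a k) \<le> norm (c k) * q" unfolding norm_mult by (intro mult_left_mono) auto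
  qed
  also have "\<dots> = (\<Sum>k\<in>{1..<N}. norm (c k)) * q" by (simp add: sum_distrib_right)
  also have "\<dots> \<le> 2 * N / pi * Hodd L * q" by (rule mult_right_mono[OF sum_norm_c]) simp
  finally have "norm (\<Sum>k\<in>{1..<N}. c k * G a k) \<le> 2 * N / pi * Hodd L * q" .
  moreover have "norm (X a) = norm (\<Sum>k\<in>{1..<N}. c k * G a k) / real N"
    unfolding X_def by (simp add: norm_mult norm_divide)
  ultimately have "norm (X a) \<le> (2 * N / pi * Hodd L * q) / real N"
    using divide_right_mono[of _ _ "real N"] by (metis of_nat_0_le_iff)
  also have "\<dots> = 2 * q / pi * Hodd L" using N_pos by (simp add: field_simps)
  finally show ?thesis .
qed

lemma norm_R: "norm (\<Sum>x\<in>UNIV. rfun x * chi a x) \<le> real M / 2"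
proof -
  have "norm (\<Sum>x\<in>UNIV. rfun x * chi a x) \<le> (\<Sum>x\<in>UNIV. norm (rfun x * chi a x))" by (rule norm_sum)
  also have "\<dots> = (\<Sum>x\<in>UNIV. if x \<in> U then 1/2 else 0)"
    by (rule sum.cong) (use S2_U in \<open>auto simp: rfun_def norm_mult norm_chi\<close>)
  also have "\<dots> = real (card U) / 2" by (simp add: sum.If_cases)
  also have "\<dots> \<le> real M / 2" using card_U by simp
  finally show ?thesis .
qed

end



lemma aux_ineq0: fixes r1 a1 b1 t1 c1 :: real
  assumes "r1 \<le> 1 + a1 + b1 + 1" "a1 + b1 < 2*t1" shows "c1/2 - t1 - 1 < (c1 - r1)/2"
proof -
  have "r1 < 2*t1 + 2" using assms by linarith
  then show ?thesis by (simp add: field_simps)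
qed

lemma aux_ineq: fixes r A q K qq :: real
  assumes "r \<le> 1 + A + q + 1" "A + q < 2*(K*q)" shows "qq/2 - K*q - 1 < (qq - r)/2"
  by (rule aux_ineq0[OF assms])

context fsetup
begin

lemma Hodd_final: "2 * Hodd L < ln 2 * real m + 0.42 * pi"
proof (cases "L = 0")
  case True
  have "0 \<le> ln (2::real) * real m" by simp
  moreover have "0 < 0.42 * pi" by simp
  moreover have "Hodd L = 0" using True by (simp add: Hodd_def)
  ultimately show ?thesis by linarith
next
  case False
  then have L1: "L \<ge> 1" by simp
  have "real L \<le> 2^(m-1)" unfolding L_def by simp
  then have "ln (real L) \<le> ln (2^(m-1))" using L1 by (intro ln_mono) auto
  also have "ln ((2::real)^(m-1)) = real (m-1) * ln 2" by (simp add: ln_realpow)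
  finally have "ln (real L) \<le> real (m-1) * ln 2" .
  then have "2 * Hodd L \<le> 2 + real (m-1) * ln 2" using Hodd_bound[OF L1] by simp
  also have "real (m-1) = real m - 1" using m1 by simp
  finally have "2 * Hodd L \<le> 2 + (real m - 1) * ln 2" .
  moreover have "pi \<ge> 3.14" using pi_approx by simp
  moreover note ln2_gt
  ultimately show ?thesis by (simp add: algebra_simps)
qed

lemma card_bound:
  assumes F: "\<forall>x. F x \<longleftrightarrow> x \<in> S1 \<union> S2" and a: "affine_bool a"
  shows "real (card {x. F x \<noteq> a x}) > real q * real q / 2 - (ln 2 / pi * real m + 0.92) * real q - 1"
proof -
  define indS where "indS x = (if x \<in> S1 \<union> S2 then 1 else (0::complex))" for x
  define R where "R = (\<Sum>x\<in>UNIV. rfun x * chi a x)"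
  define sa0 where "sa0 = (if a 0 then -1 else (1::complex))"
  have ind: "indS x = wfun x + rfun x" for x
    unfolding indS_def wfun_def rfun_def using S1_U S2_U by auto
  have T: "(\<Sum>x\<in>UNIV. (1 - 2*indS x) * chi a x) = 1 - 2 * X a - 2 * R"
  proof -
    have h0: "(\<Sum>x\<in>UNIV. (1 - 2*indS x) * chi a x) = (\<Sum>x\<in>UNIV. chi a x - 2 * (indS x * chi a x))"
      by (simp add: algebra_simps)
    have h1: "(\<Sum>x\<in>UNIV. chi a x - 2 * (indS x * chi a x)) = (\<Sum>x\<in>UNIV. chi a x) - 2 * (\<Sum>x\<in>UNIV. indS x * chi a x)"
      by (simp add: sum_subtractf sum_distrib_left)
    have h2: "(\<Sum>x\<in>UNIV. indS x * chi a x) = (\<Sum>x\<in>UNIV. wfun x * chi a x) + R"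
      unfolding R_def ind by (simp add: distrib_right sum.distrib)
    define s where "s = (\<Sum>x\<in>UNIV. chi a x)"
    have "(\<Sum>x\<in>UNIV. (1 - 2*indS x) * chi a x) = s - 2 * ((s - 1) / 2 + X a + R)"
      unfolding h0 h1 h2 sum_wfun s_def ..
    also have "\<dots> = 1 - 2 * X a - 2 * R" by (simp add: field_simps)
    finally show ?thesis .
  qed
  have pt: "(if F x \<noteq> a x then 1 else (0::complex)) = (1 - (1 - 2*indS x) * (sa0 * chi a x)) / 2" for x
    unfolding indS_def sa0_def chi_def using F by (cases "a x"; cases "a 0"; cases "F x"; simp)
  have "of_nat (card {x. F x \<noteq> a x}) = (\<Sum>x\<in>UNIV. if F x \<noteq> a x then 1 else (0::complex))"
    by (simp add: sum.If_cases)
  also have "\<dots> = (\<Sum>x\<in>UNIV. (1 - (1 - 2*indS x) * (sa0 * chi a x)) / 2)" unfolding pt ..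
  also have "\<dots> = (of_nat CARD('a) - sa0 * (\<Sum>x\<in>UNIV. (1 - 2*indS x) * chi a x)) / 2"
    by (simp add: sum_divide_distrib[symmetric] sum_subtractf sum_distrib_left mult_ac)
  also have "\<dots> = (of_nat (q*q) - sa0 * (1 - 2 * X a - 2 * R)) / 2" unfolding T card_q ..
  finally have C: "complex_of_nat (card {x. F x \<noteq> a x}) = (of_nat (q*q) - sa0 * (1 - 2 * X a - 2 * R)) / 2" .
  have "real (card {x. F x \<noteq> a x}) = Re (complex_of_nat (card {x. F x \<noteq> a x}))" by simp
  also have "\<dots> = (real q * real q - Re (sa0 * (1 - 2 * X a - 2 * R))) / 2" unfolding C by simp
  finally have C2: "real (card {x. F x \<noteq> a x}) = (real q * real q - Re (sa0 * (1 - 2 * X a - 2 * R))) / 2" .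
  have "Re (sa0 * (1 - 2 * X a - 2 * R)) \<le> norm (sa0 * (1 - 2 * X a - 2 * R))" by (rule complex_Re_le_cmod)
  also have "\<dots> = norm (1 - 2 * X a - 2 * R)" unfolding sa0_def by (simp add: norm_mult)
  also have "\<dots> \<le> 1 + 2 * norm (X a) + 2 * norm R"
    by (rule order_trans[OF norm_triangle_ineq4]) (rule order_trans[OF add_right_mono[OF norm_triangle_ineq4]], simp add: norm_mult)
  also have "\<dots> \<le> 1 + 2 * (2 * q / pi * Hodd L) + 2 * (real M / 2)"
    using norm_X[OF a] norm_R[of a] unfolding R_def by simp
  finally have B0: "Re (sa0 * (1 - 2 * X a - 2 * R)) \<le> 1 + 2 * (2 * q / pi * Hodd L) + 2 * (real M / 2)" .
  have "1 + 2 * (2 * q / pi * Hodd L) + 2 * (real M / 2) = 1 + 4 * q / pi * Hodd L + real q + 1"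
    unfolding M_def by (simp add: field_simps)
  with B0 have B: "Re (sa0 * (1 - 2 * X a - 2 * R)) \<le> 1 + 4 * q / pi * Hodd L + real q + 1" by linarith
  have qpos: "real q > 0" using q2 by simp
  have "2 * Hodd L / pi < ln 2 * real m / pi + 0.42"
    using Hodd_final by (simp add: field_simps)
  then have "real q * (2 * Hodd L / pi) < real q * (ln 2 * real m / pi + 0.42)"
    using qpos by (intro mult_strict_left_mono)
  moreover have "4*q/pi*Hodd L = 2*(real q*(2*Hodd L/pi))" by (simp add: field_simps)
  moreover have "2*((ln 2/pi*real m + 0.92)*real q) - real q = 2*(real q*(ln 2*real m/pi + 0.42))"
    by (simp add: field_simps)
  ultimately have lt: "4 * q / pi * Hodd L + real q < 2 * ((ln 2 / pi * real m + 0.92) * real q)"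
    by linarith
  show ?thesis unfolding C2 by (rule aux_ineq[OF B lt])
qed

end

theorem theorem4:
  fixes m n :: nat and \<alpha> :: "'a::{field,finite}" and F :: "'a \<Rightarrow> bool"
  assumes "m \<ge> 1" and "n = 2 * m"
    and "CARD('a) = 2 ^ n"
    and "primitive_element \<alpha>"
    and "\<forall>x. F x \<longleftrightarrow>
           x \<in> {y * z | y z. y \<in> {(\<alpha> ^ (2^m + 1)) ^ i | i. 1 \<le> i \<and> i \<le> 2^(m-1) - 1}
                             \<and> z \<in> {(\<alpha> ^ (2^m - 1)) ^ k | k. True}}
             \<union> {(\<alpha> ^ (2^m - 1)) ^ i | i. i \<le> 2^(m-1)}"
  shows "real (nonlinearity F) > 2 ^ (n - 1) - (ln 2 / pi * real m + 0.92) * 2 ^ m - 1"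
proof -
  interpret fsetup \<alpha> m using assms by unfold_locales auto
  have F: "\<forall>x. F x \<longleftrightarrow> x \<in> S1 \<union> S2" using assms(5) unfolding S1_def Gam_def U_def S2_def .
  let ?A = "{card {x. F x \<noteq> a x} | a. affine_bool a}"
  have fin: "finite ?A"
  proof -
    have "?A \<subseteq> {..CARD('a)}" by (auto intro: card_mono)
    then show ?thesis using finite_subset by blast
  qed
  have ne: "?A \<noteq> {}"
  proof -
    have "affine_bool (\<lambda>_::'a. False)" unfolding affine_bool_def by simp
    then show ?thesis by blast
  qed
  obtain a where a: "affine_bool a" "nonlinearity F = card {x. F x \<noteq> a x}"
    using Min_in[OF fin ne] unfolding nonlinearity_def by auto
  have main: "real (nonlinearity F) > real q * real q / 2 - (ln 2 / pi * real m + 0.92) * real q - 1"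
    unfolding a(2) by (rule card_bound[OF F a(1)])
  have e1: "(2::real) ^ (n - 1) = real q * real q / 2"
  proof -
    have "n = Suc (2*m - 1)" using assms(1,2) by simp
    then have "(2::real)^n = 2 * 2^(n-1)" by (metis diff_Suc_1 power_Suc)
    moreover have "(2::real)^n = real q * real q" unfolding assms(2) q_def by (simp add: power_mult power2_eq_square mult.commute)
    ultimately show ?thesis by simp
  qed
  have e2: "(2::real)^m = real q" unfolding q_def by simp
  show ?thesis unfolding e1 e2 by (rule main)
qed


end
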